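(* Let $N,L\ge1$. Then for any $k\in\mathbb{R}^2$ and any $A\ge|k|$, the set \[ \{k'\in\mathbb{R}^2:\ |k'|\le N,\ |k-k'|\le N,\ |k'|+|k-k'|\in[A,A+L]\} \] can be covered by at most $O(N^{\frac32}L^{\frac12})$ squares of unit side length, with the implied constant independent of $N,L,k,A$. *)

theory Defs
  imports "HOL-Analysis.Analysis"
begin

definition unit_square :: "real^2 \<Rightarrow> (real^2) set" where
  "unit_square c = {x. \<forall>i. c$i \<le> x$i \<and> x$i \<le> c$i + 1}"

definition shell_set :: "real \<Rightarrow> real \<Rightarrow> real^2 \<Rightarrow> real \<Rightarrow> (real^2) set" where
  "shell_set N L k A = {k'. norm k' \<le> N \<and> norm (k - k') \<le> N \<and>
       A \<le> norm k' + norm (k - k') \<and> norm k' + norm (k - k') \<le> A + L}"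

end

theory Submission
  imports Defs
begin

definition e2 :: "real^2" where "e2 = (\<chi> i. 1)"
lemma measure_box01: "measure lebesgue (box z (z + e2)) = 1"
proof -
  have "box z (z + e2) \<in> sets lborel" by simp
  then have "measure lebesgue (box z (z + e2)) = measure lborel (box z (z + e2))"
    by (simp add: measure_completion)
  also have "\<dots> = (\<Prod>b\<in>Basis. ((z + e2) - z) \<bullet> b)" by (rule measure_lborel_box) (auto simp: Basis_vec_def inner_axis e2_def)
  also have "\<dots> = 1" by (rule prod.neutral) (auto simp: Basis_vec_def inner_axis e2_def)
  finally show ?thesis .
qed

lemma box01_lmeas: "box z (z + e2) \<in> lmeasurable"
  by (simp add: lmeasurable_open)

lemma floor_bounds: "real_of_int \<lfloor>(x::real)\<rfloor> \<le> x \<and> x \<le> real_of_int \<lfloor>x\<rfloor> + 1"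
  using of_int_floor_le[of "x"] real_of_int_floor_add_one_ge[of "x"] by linarith

lemma in_unit_square_floor: "x \<in> unit_square (\<chi> i. real_of_int \<lfloor>x$i\<rfloor>)"
  unfolding unit_square_def using floor_bounds by simp


lemma floor_range:
  fixes y R :: real
  assumes "\<bar>y\<bar> \<le> R"
  shows "-(\<lceil>R\<rceil>+1) \<le> \<lfloor>y\<rfloor> \<and> \<lfloor>y\<rfloor> \<le> \<lceil>R\<rceil>+1"
proof -
  have y1: "y \<le> R" and y2: "-R \<le> y" using assms by linarith+
  have "\<lfloor>y\<rfloor> \<le> \<lfloor>R\<rfloor>" by (rule floor_mono[OF y1])
  moreover have "\<lfloor>R\<rfloor> \<le> \<lceil>R\<rceil>" by (rule floor_le_ceiling)
  moreover have "\<lfloor>-R\<rfloor> \<le> \<lfloor>y\<rfloor>" by (rule floor_mono[OF y2])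
  moreover have "\<lfloor>-R\<rfloor> = -\<lceil>R\<rceil>" by (simp add: ceiling_def)
  ultimately show ?thesis by linarith
qed
lemma comp_le: "norm (x::real^2) \<le> R \<Longrightarrow> \<bar>x$i\<bar> \<le> R"
  using component_le_norm_cart[of x i] by linarith

lemma cover_count:
  fixes S T :: "(real^2) set"
  assumes SR: "S \<subseteq> cball 0 R" and Tm: "T \<in> lmeasurable"
    and ST: "\<And>x y. x \<in> S \<Longrightarrow> dist x y < 2 \<Longrightarrow> y \<in> T"
  shows "\<exists>F. finite F \<and> real (card F) \<le> measure lebesgue T \<and> S \<subseteq> (\<Union>c\<in>F. unit_square c)"
proof -
  define fl where "fl x = (\<chi> i. real_of_int \<lfloor>x$i\<rfloor>)" for x :: "real^2"
  define F where "F = fl ` S"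
  have cov: "S \<subseteq> (\<Union>c\<in>F. unit_square c)"
  proof
    fix x assume "x \<in> S"
    have "x \<in> unit_square (fl x)"
      unfolding fl_def by (rule in_unit_square_floor)
    then show "x \<in> (\<Union>c\<in>F. unit_square c)" using \<open>x \<in> S\<close> F_def by blast
  qed
  define M where "M = \<lceil>R\<rceil> + 1"
  define g where "g z = (\<lfloor>z$1\<rfloor>, \<lfloor>(z::real^2)$2\<rfloor>)" for z
  have flfl: "\<lfloor>fl x $ i\<rfloor> = \<lfloor>x$i\<rfloor>" for x i by (simp add: fl_def)
  have inj: "inj_on g F"
  proof (rule inj_onI)
    fix z w assume zF: "z \<in> F" and wF: "w \<in> F" and gzw: "g z = g w"
    from zF obtain x where z: "z = fl x" unfolding F_def by blast
    from wF obtain y where w: "w = fl y" unfolding F_def by blast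
    from gzw have e: "\<lfloor>x$1\<rfloor> = \<lfloor>y$1\<rfloor>" "\<lfloor>x$2\<rfloor> = \<lfloor>y$2\<rfloor>"
      unfolding g_def z w flfl by simp_all
    have "fl x $ i = fl y $ i" for i
      using exhaust_2[of i] e by (auto simp: fl_def)
    then show "z = w" unfolding z w by (simp add: vec_eq_iff)
  qed
  have gF: "g ` F \<subseteq> {-M..M} \<times> {-M..M}"
  proof
    fix p assume "p \<in> g ` F"
    then obtain x where x: "x \<in> S" "p = g (fl x)" unfolding F_def by blast
    have "x \<in> cball 0 R" using SR x(1) by (rule subsetD)
    then have nx: "norm x \<le> R" by simp
    have r1: "-M \<le> \<lfloor>x$1\<rfloor> \<and> \<lfloor>x$1\<rfloor> \<le> M"
      unfolding M_def by (rule floor_range[OF comp_le[OF nx]])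
    have r2: "-M \<le> \<lfloor>x$2\<rfloor> \<and> \<lfloor>x$2\<rfloor> \<le> M"
      unfolding M_def by (rule floor_range[OF comp_le[OF nx]])
    have "p = (\<lfloor>x$1\<rfloor>, \<lfloor>x$2\<rfloor>)" using x(2) by (simp add: g_def flfl)
    then show "p \<in> {-M..M} \<times> {-M..M}" using r1 r2 by simp
  qed
  have finF: "finite F" using inj_on_finite[OF inj gF] by simp
  define P where "P z = box z (z + e2)" for z
  have memP: "y \<in> P z \<longleftrightarrow> (\<forall>i. z$i < y$i \<and> y$i < z$i + 1)" for y z
    unfolding P_def by (simp add: mem_box_cart e2_def)
  have Pfl: "y \<in> P (fl x) \<Longrightarrow> fl y = fl x" for x y
  proof -
    assume "y \<in> P (fl x)"
    then have h: "real_of_int \<lfloor>x$i\<rfloor> < y$i \<and> y$i < real_of_int \<lfloor>x$i\<rfloor> + 1" for i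
      unfolding memP fl_def by simp
    have "\<lfloor>y$i\<rfloor> = \<lfloor>x$i\<rfloor>" for i
      by (intro floor_unique) (use h[of i] in auto)
    then show ?thesis by (simp add: fl_def)
  qed
  have disj: "disjoint_family_on P F"
    unfolding disjoint_family_on_def F_def
    by (metis (no_types, lifting) Pfl disjoint_iff imageE)
  have Pm: "P z \<in> lmeasurable" for z
    unfolding P_def by (rule box01_lmeas)
  have Pmeas: "measure lebesgue (P z) = 1" for z
    unfolding P_def by (rule measure_box01)
  have "measure lebesgue (\<Union>z\<in>F. P z) = (\<Sum>z\<in>F. measure lebesgue (P z))"
  proof -
    have s1: "P ` F \<subseteq> sets lebesgue" using Pm by (auto intro: fmeasurableD)
    have s2: "emeasure lebesgue (P z) \<noteq> \<infinity>" if "z \<in> F" for z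
      using fmeasurableD2[OF Pm[of z]] by (simp add: infinity_ennreal_def)
    show ?thesis by (rule measure_finite_Union[OF finF s1 disj s2])
  qed
  also have "\<dots> = real (card F)" by (simp add: Pmeas)
  finally have eq: "measure lebesgue (\<Union>z\<in>F. P z) = real (card F)" .
  have sub: "(\<Union>z\<in>F. P z) \<subseteq> T"
  proof
    fix y assume "y \<in> (\<Union>z\<in>F. P z)"
    then obtain x where x: "x \<in> S" "y \<in> P (fl x)" by (auto simp: F_def)
    have "\<bar>(x - y)$i\<bar> < 1" for i
      using x(2) unfolding memP fl_def by simp (smt (verit) of_int_floor_le real_of_int_floor_add_one_gt)
    then have "dist x y < 2"
      unfolding dist_norm using norm_le_l1_cart[of "x - y"]
      by (smt (verit, best) sum_2)
    then show "y \<in> T" using ST x by blast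
  qed
  have "measure lebesgue (\<Union>z\<in>F. P z) \<le> measure lebesgue T"
    by (intro measure_mono_fmeasurable sub) (use Tm finF Pm in auto)
  then have cF: "real (card F) \<le> measure lebesgue T" using eq by linarith
  show ?thesis by (intro exI[of _ F] conjI finF cF cov)
qed


lemma ellipse_lmeas:
  fixes k :: "real^2" and s :: real
  shows "{x. norm x + norm (k - x) \<le> s} \<in> lmeasurable"
proof -
  define E where "E = {x. norm x + norm (k - x) \<le> s}"
  have "bounded E"
  proof (rule bounded_subset[OF bounded_cball[of 0 s]])
    show "E \<subseteq> cball 0 s"
    proof
      fix x assume "x \<in> E"
      then have "norm x + norm (k-x) \<le> s" by (simp add: E_def)
      then have "norm x \<le> s" using norm_ge_zero[of "k-x"] by linarith
      then show "x \<in> cball 0 s" by simp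
    qed
  qed
  moreover have "closed E" unfolding E_def
    by (intro closed_Collect_le continuous_intros)
  ultimately show ?thesis unfolding E_def[symmetric] by (simp add: compact_eq_bounded_closed lmeasurable_compact)
qed


lemma ell_core:
  fixes a c X Y r1 r2 :: real
  assumes c0: "c \<ge> 0" and ac: "a > c" and r1: "r1 \<ge> 0" and r2: "r2 \<ge> 0"
    and e1: "r1^2 = (X+c)^2 + Y^2" and e2: "r2^2 = (X-c)^2 + Y^2"
    and D: "\<bar>r1 - r2\<bar> \<le> 2*c"
  shows "r1 + r2 \<le> 2*a \<longleftrightarrow> X^2/a^2 + Y^2/(a^2-c^2) \<le> 1"
proof -
  have id: "(4*a^2 - (r1+r2)^2)*(4*a^2 - (r1-r2)^2) = 16*(a^2*(a^2-c^2) - (a^2-c^2)*X^2 - a^2*Y^2)"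
    using e1 e2 by algebra
  have a0: "a > 0" using c0 ac by linarith
  have ca: "c^2 < a^2" using c0 ac by (simp add: power_strict_mono)
  have "(r1-r2)^2 \<le> (2*c)^2" using D c0 by (metis abs_le_square_iff abs_of_nonneg mult_nonneg_nonneg zero_le_numeral)
  then have pos2: "4*a^2 - (r1-r2)^2 > 0" using ca by simp
  have pa: "a^2*(a^2-c^2) > 0" using ca a0 by simp
  have "X^2/a^2 + Y^2/(a^2-c^2) = ((a^2-c^2)*X^2 + a^2*Y^2)/(a^2*(a^2-c^2))"
    using ca a0 by (simp add: field_simps)
  then have "X^2/a^2 + Y^2/(a^2-c^2) \<le> 1 \<longleftrightarrow> (a^2-c^2)*X^2 + a^2*Y^2 \<le> a^2*(a^2-c^2)"
    by (simp add: divide_le_eq_1_pos[OF pa])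
  also have "\<dots> \<longleftrightarrow> 0 \<le> (4*a^2 - (r1+r2)^2)*(4*a^2 - (r1-r2)^2)"
  proof -
    have aux: "\<And>P Q R Z::real. Z = 16*(P - Q - R) \<Longrightarrow> (Q + R \<le> P) = (0 \<le> Z)" by auto
    show ?thesis by (rule aux[OF id])
  qed
  also have "\<dots> \<longleftrightarrow> (r1+r2)^2 \<le> (2*a)^2"
    using pos2 by (simp add: zero_le_mult_iff power_mult_distrib)
  also have "\<dots> \<longleftrightarrow> r1 + r2 \<le> 2*a"
    by (rule power_mono_iff) (use r1 r2 a0 in auto)
  finally show ?thesis by simp
qed

lemma inner_2: "(x::real^2) \<bullet> y = x$1*y$1 + x$2*y$2"
  by (simp add: inner_vec_def sum_2)

lemma norm_2: "norm (x::real^2)^2 = x$1^2 + x$2^2"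
proof -
  have "norm x ^2 = x \<bullet> x" by (rule power2_norm_eq_inner)
  then show ?thesis by (simp add: inner_2 power2_eq_square)
qed

lemma ellipse_measure:
  fixes k :: "real^2" and s :: real
  assumes sk: "s > norm k"
  shows "{x. norm x + norm (k - x) \<le> s} \<in> lmeasurable \<and>
    measure lebesgue {x. norm x + norm (k - x) \<le> s} =
      (s/2) * sqrt((s/2)^2 - (norm k/2)^2) * measure lebesgue (cball (0::real^2) 1)"
proof -
  define E where "E = {x. norm x + norm (k - x) \<le> s}"
  define d where "d = norm k"
  define c where "c = d/2"
  define a where "a = s/2"
  define b where "b = sqrt(a^2 - c^2)"
  have c0: "c \<ge> 0" by (simp add: c_def d_def)
  have ac: "a > c" using sk by (simp add: a_def c_def d_def)
  have ca: "c^2 < a^2" using c0 ac by (simp add: power_strict_mono)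
  have b0: "b > 0" using ca by (simp add: b_def)
  have bb: "b^2 = a^2 - c^2" using ca by (simp add: b_def)
  obtain u :: "real^2" where nu: "norm u = 1" and ku: "k = d *\<^sub>R u"
  proof (cases "k = 0")
    case True then show ?thesis using that[of "axis 1 1"] by (simp add: d_def norm_axis_1)
  next
    case False then show ?thesis using that[of "k /\<^sub>R d"] by (simp add: d_def)
  qed
  have hu: "u$1^2 + u$2^2 = 1" using nu norm_2[of u] by simp
  define v :: "real^2" where "v = (\<chi> i. if i = 1 then -(u$2) else u$1)"
  have v1: "v$1 = -(u$2)" "v$2 = u$1" by (simp_all add: v_def)
  have k12: "k$1 = d*u$1" "k$2 = d*u$2" by (simp_all add: ku)
  have cd: "d = 2*c" by (simp add: c_def)
  have char: "x \<in> E \<longleftrightarrow> (u \<bullet> (x - (1/2) *\<^sub>R k))^2/a^2 + (v \<bullet> (x - (1/2) *\<^sub>R k))^2/b^2 \<le> 1" for x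
  proof -
    define X where "X = u \<bullet> (x - (1/2) *\<^sub>R k)"
    define Y where "Y = v \<bullet> (x - (1/2) *\<^sub>R k)"
    have X: "X = u$1*x$1 + u$2*x$2 - c"
      unfolding X_def inner_2 using hu by (simp add: k12 cd) algebra
    have Y: "Y = -u$2*x$1 + u$1*x$2"
      unfolding Y_def inner_2 by (simp add: k12 v1 algebra_simps)
    have e1: "norm x^2 = (X+c)^2 + Y^2"
      unfolding norm_2 X Y using hu by algebra
    have e2: "norm (k - x)^2 = (X-c)^2 + Y^2"
      unfolding norm_2 X Y using hu by (simp add: k12 cd) algebra
    have D: "\<bar>norm x - norm (k - x)\<bar> \<le> 2*c"
      using norm_triangle_ineq3[of x "x - k"] by (simp add: norm_minus_commute c_def d_def)
    have "x \<in> E \<longleftrightarrow> norm x + norm (k - x) \<le> 2*a" by (simp add: E_def a_def)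
    also have "\<dots> \<longleftrightarrow> X^2/a^2 + Y^2/(a^2-c^2) \<le> 1"
      by (rule ell_core[OF c0 ac norm_ge_zero norm_ge_zero e1 e2 D])
    finally show ?thesis by (simp add: X_def Y_def bb)
  qed
  define M where "M p = (a * (u \<bullet> p)) *\<^sub>R u + (b * (v \<bullet> p)) *\<^sub>R v" for p :: "real^2"
  have linM: "linear M"
    by (rule linearI) (simp_all add: M_def inner_add_right scaleR_add_right algebra_simps)
  have uu: "u \<bullet> u = 1" "v \<bullet> v = 1" "u \<bullet> v = 0" "v \<bullet> u = 0"
    using hu by (simp_all add: inner_2 v1 power2_eq_square)
  have dec: "y = (u \<bullet> y) *\<^sub>R u + (v \<bullet> y) *\<^sub>R v" for y :: "real^2"
  proof -
    have "y$1 = (u$1*y$1 + u$2*y$2)*u$1 + (-u$2*y$1 + u$1*y$2)*(-u$2)" using hu by algebra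
    moreover have "y$2 = (u$1*y$1 + u$2*y$2)*u$2 + (-u$2*y$1 + u$1*y$2)*(u$1)" using hu by algebra
    ultimately show ?thesis by (simp add: vec_eq_iff forall_2 inner_2 v1 algebra_simps)
  qed
  have nrm: "norm y^2 = (u \<bullet> y)^2 + (v \<bullet> y)^2" for y :: "real^2"
    unfolding norm_2 inner_2 v1 using hu by algebra
  define g where "g p = (1/2) *\<^sub>R k + M p" for p
  have Eeq: "E = g ` cball 0 1"
  proof
    show "E \<subseteq> g ` cball 0 1"
    proof
      fix x assume xE: "x \<in> E"
      define y where "y = x - (1/2) *\<^sub>R k"
      define p where "p = ((u \<bullet> y)/a) *\<^sub>R u + ((v \<bullet> y)/b) *\<^sub>R v"
      have up: "u \<bullet> p = (u \<bullet> y)/a" "v \<bullet> p = (v \<bullet> y)/b"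
        by (simp_all add: p_def inner_add_right uu)
      have "M p = y" using ac c0 b0 dec[of y] by (simp add: M_def up)
      then have "g p = x" by (simp add: g_def y_def)
      moreover have "norm p^2 \<le> 1"
        using xE unfolding char nrm[of p] up y_def[symmetric]
        by (simp add: power_divide)
      then have "norm p \<le> 1" by (simp add: power_le_one_iff)
      ultimately show "x \<in> g ` cball 0 1" by force
    qed
  next
    show "g ` cball 0 1 \<subseteq> E"
    proof
      fix x assume "x \<in> g ` cball 0 1"
      then obtain p where p: "norm p \<le> 1" "x = g p" by auto
      have y: "x - (1/2) *\<^sub>R k = M p" by (simp add: p g_def)
      have "u \<bullet> M p = a * (u \<bullet> p)" "v \<bullet> M p = b * (v \<bullet> p)"
        by (simp_all add: M_def inner_add_right uu)
      then have "(u \<bullet> (x - (1/2) *\<^sub>R k))^2/a^2 + (v \<bullet> (x - (1/2) *\<^sub>R k))^2/b^2 = norm p ^2"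
        using ac c0 b0 unfolding y nrm[of p] by (simp add: power_mult_distrib)
      also have "\<dots> \<le> 1" using p by (simp add: power_le_one)
      finally show "x \<in> E" using char by blast
    qed
  qed
  have detM: "det (matrix M) = a * b"
    unfolding det_2 matrix_def using hu
    by (simp add: M_def inner_2 v1 axis_def) algebra
  have "measure lebesgue E = measure lebesgue (M ` cball 0 1)"
  proof -
    have "g ` cball 0 1 = (+) ((1/2) *\<^sub>R k) ` (M ` cball 0 1)"
      by (auto simp: g_def image_image)
    then show ?thesis using Eeq by (simp add: measure_translation)
  qed
  also have "\<dots> = a * b * measure lebesgue (cball (0::real^2) 1)"
    using measure_linear_image[OF linM, of "cball 0 1"] detM ac c0 b0
    by (simp add: lmeasurable_cball)
  finally have meas: "measure lebesgue E = a * b * measure lebesgue (cball (0::real^2) 1)" .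
  have "bounded E \<and> closed E"
  proof
    show "bounded E"
    proof (rule bounded_subset[OF bounded_cball[of 0 s]])
      show "E \<subseteq> cball 0 s"
      proof
        fix x assume "x \<in> E"
        then have "norm x + norm (k-x) \<le> s" by (simp add: E_def)
        then have "norm x \<le> s" using norm_ge_zero[of "k-x"] by linarith
        then show "x \<in> cball 0 s" by simp
      qed
    qed
    show "closed E" unfolding E_def
      by (intro closed_Collect_le continuous_intros)
  qed
  then have "E \<in> lmeasurable" by (simp add: compact_eq_bounded_closed lmeasurable_compact)
  then show ?thesis using meas unfolding E_def a_def b_def c_def d_def by simp
qed



lemma key_bound:
  fixes N L A d :: real
  assumes L1: "1 \<le> L" and LN: "L < N" and d0: "0 \<le> d" and dA: "d \<le> A" and AN: "A \<le> 2*N"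
  shows "(A-5)/2 \<le> d/2 \<Longrightarrow> ((A+L+4)/2)* sqrt(((A+L+4)/2)^2-(d/2)^2) \<le> 48*(N* sqrt(N*L))"
    and "d/2 < (A-5)/2 \<Longrightarrow> ((A+L+4)/2)* sqrt(((A+L+4)/2)^2-(d/2)^2)
             - ((A-5)/2)* sqrt(((A-5)/2)^2-(d/2)^2) \<le> 48*(N* sqrt(N*L))"
proof -
  define a1 where "a1 = (A+L+4)/2"
  define a0 where "a0 = (A-5)/2"
  define c where "c = d/2"
  have N1: "N \<ge> 1" using L1 LN by linarith
  have c0: "0 \<le> c" using d0 unfolding c_def by simp
  have ca1: "c < a1" using dA L1 unfolding a1_def c_def by (simp add: field_simps)
  have a1N: "a1 \<le> 4*N" using AN LN N1 unfolding a1_def by (simp add: field_simps)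
  have a10: "a1 - a0 \<le> 5*L" using L1 unfolding a1_def a0_def by (simp add: field_simps)
  have a01: "a0 < a1" using L1 unfolding a1_def a0_def by (simp add: field_simps)
  have sNL: "0 \<le> sqrt (N*L)" using N1 L1 by simp
  have s40: "sqrt(40*N*L) \<le> 7* sqrt(N*L)"
  proof (rule real_le_lsqrt)
    show "0 \<le> 7* sqrt(N*L)" using sNL by simp
    have "(7* sqrt(N*L))^2 = 49*(N*L)" using N1 L1 by (simp add: power_mult_distrib)
    then show "40*N*L \<le> (7* sqrt(N*L))^2" using N1 L1 by simp
  qed
  have LsNL: "L \<le> sqrt (N*L)"
    by (rule real_le_rsqrt) (use L1 LN in \<open>simp add: power2_eq_square mult_right_mono\<close>)
  have b1le: "sqrt(a1^2 - c^2) \<le> a1" using c0 ca1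
    by (intro real_le_lsqrt) auto
  show "(A-5)/2 \<le> d/2 \<Longrightarrow> ((A+L+4)/2)* sqrt(((A+L+4)/2)^2-(d/2)^2) \<le> 48*(N* sqrt(N*L))"
  proof -
    assume "(A-5)/2 \<le> d/2"
    then have a0c: "a0 \<le> c" by (simp add: a0_def c_def)
    have "a1^2 - c^2 = (a1-c)*(a1+c)" by (simp add: power2_eq_square algebra_simps)
    also have "\<dots> \<le> (5*L)*(8*N)"
      using a0c c0 ca1 a10 a1N by (intro mult_mono) auto
    finally have "a1^2 - c^2 \<le> 40*N*L" by (simp add: mult_ac)
    then have "sqrt(a1^2 - c^2) \<le> sqrt(40*N*L)" by simp
    then have "sqrt(a1^2 - c^2) \<le> 7* sqrt(N*L)" using s40 by linarith
    then have "a1* sqrt(a1^2 - c^2) \<le> (4*N)*(7* sqrt(N*L))"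
      using a1N c0 ca1 by (intro mult_mono) auto
    moreover have "(4*N)*(7* sqrt(N*L)) \<le> 48*(N* sqrt(N*L))" using sNL N1 by simp
    ultimately have "a1* sqrt(a1^2 - c^2) \<le> 48*(N* sqrt(N*L))" by linarith
    then show ?thesis unfolding a1_def c_def .
  qed
  show "d/2 < (A-5)/2 \<Longrightarrow> ((A+L+4)/2)* sqrt(((A+L+4)/2)^2-(d/2)^2)
             - ((A-5)/2)* sqrt(((A-5)/2)^2-(d/2)^2) \<le> 48*(N* sqrt(N*L))"
  proof -
    assume "d/2 < (A-5)/2"
    then have ca0: "c < a0" by (simp add: a0_def c_def)
    define b1 where "b1 = sqrt(a1^2 - c^2)"
    define b0 where "b0 = sqrt(a0^2 - c^2)"
    have b00: "0 \<le> b0" using ca0 c0 by (simp add: b0_def power_mono)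
    have b1sq: "b1^2 = a1^2 - c^2" using ca1 c0 by (simp add: b1_def power_mono)
    have b0sq: "b0^2 = a0^2 - c^2" using ca0 c0 by (simp add: b0_def power_mono)
    have b01: "b0 \<le> b1" unfolding b0_def b1_def using a01 ca0 c0
      by (intro real_sqrt_le_mono) (simp add: power_mono)
    have "(b1 - b0)^2 \<le> b1^2 - b0^2"
      using b00 b01 mult_left_mono[OF b01 b00] by (simp add: power2_eq_square algebra_simps)
    then have "b1 - b0 \<le> sqrt(b1^2 - b0^2)" by (rule real_le_rsqrt)
    also have "b1^2 - b0^2 = (a1-a0)*(a1+a0)" by (simp add: b1sq b0sq) (simp add: power2_eq_square algebra_simps)
    also have "\<dots> \<le> (5*L)*(8*N)" using a10 a01 ca0 c0 a1N by (intro mult_mono) auto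
    finally have "b1 - b0 \<le> sqrt((5*L)*(8*N))" by simp
    also have "(5*L)*(8*N) = 40*N*L" by simp
    finally have "b1 - b0 \<le> sqrt(40*N*L)" .
    then have db: "b1 - b0 \<le> 7* sqrt(N*L)" using s40 by linarith
    have t2: "a0*(b1 - b0) \<le> (4*N)*(7* sqrt(N*L))"
      using a01 a1N ca0 c0 db b01 by (intro mult_mono) auto
    have t1: "(a1 - a0)*b1 \<le> (5*L)*(4*N)"
    proof -
      have b1a: "b1 \<le> 4*N" using b1le a1N unfolding b1_def by linarith
      have b10: "0 \<le> b1" using b00 b01 by linarith
      show ?thesis by (intro mult_mono) (use a10 b1a b10 L1 in auto)
    qed
    have "(5*L)*(4*N) \<le> 20*(N* sqrt(N*L))" using LsNL N1 by (simp add: mult_left_mono)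
    have "a1*b1 - a0*b0 = (a1 - a0)*b1 + a0*(b1 - b0)" by (simp add: algebra_simps)
    also have "\<dots> \<le> 48*(N* sqrt(N*L))" using t1 t2 \<open>(5*L)*(4*N) \<le> 20*(N* sqrt(N*L))\<close> by linarith
    finally show ?thesis unfolding a1_def a0_def c_def b1_def b0_def .
  qed
qed


lemma powr_rewrite:
  fixes N L :: real
  assumes "N \<ge> 1" "L \<ge> 1"
  shows "N powr (3/2) * L powr (1/2) = N * sqrt (N*L)"
proof -
  have "N powr (3/2) = N powr (1 + 1/2)" by simp
  also have "\<dots> = N powr 1 * N powr (1/2)" by (rule powr_add)
  also have "\<dots> = N * N powr (1/2)" using assms by simp
  finally have "N powr (3/2) = N * sqrt N" using assms by (simp add: powr_half_sqrt)
  moreover have "L powr (1/2) = sqrt L" using assms by (simp add: powr_half_sqrt)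
  ultimately show ?thesis by (simp add: real_sqrt_mult)
qed

lemma Cbound:
  fixes X m :: real
  assumes X0: "0 \<le> X" and m0: "0 \<le> m"
  shows "9*X*m \<le> (48*m+36)*X" and "48*X*m \<le> (48*m+36)*X"
proof -
  have p: "0 \<le> m*X" using X0 m0 by simp
  have e: "(48*m+36)*X = 48*(m*X) + 36*X" by (simp add: algebra_simps)
  have f: "9*X*m = 9*(m*X)" "48*X*m = 48*(m*X)" by (simp_all add: mult_ac)
  show "9*X*m \<le> (48*m+36)*X" unfolding e f using p X0 by linarith
  show "48*X*m \<le> (48*m+36)*X" unfolding e f using p X0 by linarith
qed

theorem propositionA2:
  shows "\<exists>C>0. \<forall>N L :: real. \<forall>k :: real^2. \<forall>A :: real.
           N \<ge> 1 \<longrightarrow> L \<ge> 1 \<longrightarrow> A \<ge> norm k \<longrightarrow>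
           (\<exists>F. finite F \<and> real (card F) \<le> C * N powr (3/2) * L powr (1/2) \<and>
                shell_set N L k A \<subseteq> (\<Union>c\<in>F. unit_square c))"
proof -
  define m where "m = measure lebesgue (cball (0::real^2) 1)"
  have m0: "m \<ge> 0" by (simp add: m_def)
  define C where "C = 48*m + 36"
  have C0: "C > 0" using m0 by (simp add: C_def)
  show ?thesis
  proof (intro exI[of _ C] conjI allI impI)
    show "C > 0" using m0 by (simp add: C_def)
    fix N L :: real and k :: "real^2" and A :: real
    assume N1: "N \<ge> 1" and L1: "L \<ge> 1" and Ak: "A \<ge> norm k"
    define S where "S = shell_set N L k A"
    have SR: "S \<subseteq> cball 0 N" by (auto simp: S_def shell_set_def)
    have sNL: "0 \<le> N * sqrt (N*L)" using N1 L1 by simp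
    have CN: "C * N powr (3/2) * L powr (1/2) = C * (N * sqrt (N*L))"
      using powr_rewrite[OF N1 L1] by (simp add: mult.assoc)
    have "\<exists>F. finite F \<and> real (card F) \<le> C * (N * sqrt (N*L)) \<and> S \<subseteq> (\<Union>c\<in>F. unit_square c)"
    proof (cases "N \<le> L")
      case True
      define T where "T = {x::real^2. norm x + norm (0 - x) \<le> 2*N+4}"
      have Tm: "T \<in> lmeasurable" unfolding T_def by (rule ellipse_lmeas)
      have pos: "2*N+4 > norm (0::real^2)" using N1 by simp
      have "measure lebesgue T = ((2*N+4)/2) * sqrt(((2*N+4)/2)^2 - (norm (0::real^2)/2)^2) * m"
        using conjunct2[OF ellipse_measure[OF pos]] unfolding T_def m_def .
      moreover have "(2*N+4)/2 = N+2" by simp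
      moreover have "sqrt((N+2)^2 - (norm (0::real^2)/2)^2) = N+2" using N1 by simp
      ultimately have Tmeas: "measure lebesgue T = (N+2)*(N+2)*m" by metis
      have ST: "y \<in> T" if "x \<in> S" "dist x y < 2" for x y
      proof -
        have "norm x \<le> N" using SR that(1) by auto
        moreover have "\<bar>norm y - norm x\<bar> \<le> norm (y - x)" by (rule norm_triangle_ineq3)
        moreover have "norm (y - x) = dist x y" by (simp add: dist_norm norm_minus_commute)
        ultimately have "norm y \<le> N + 2" using that(2) by linarith
        then show ?thesis by (simp add: T_def)
      qed
      from cover_count[OF SR Tm ST] obtain F where
        F0: "finite F \<and> real (card F) \<le> measure lebesgue T \<and> S \<subseteq> (\<Union>c\<in>F. unit_square c)" ..
      note F = F0[THEN conjunct1] F0[THEN conjunct2, THEN conjunct1] F0[THEN conjunct2, THEN conjunct2]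
      have NsNL: "N \<le> sqrt (N*L)"
      proof (rule real_le_rsqrt)
        have "N*N \<le> N*L" by (rule mult_left_mono[OF True]) (use N1 in simp)
        then show "N^2 \<le> N*L" by (simp add: power2_eq_square)
      qed
      have N3: "N+2 \<le> 3*N" using N1 by linarith
      have "(N+2)*(N+2) \<le> (3*N)*(3*N)" by (rule mult_mono[OF N3 N3]) (use N1 in auto)
      also have "\<dots> = 9*(N*N)" by simp
      also have "\<dots> \<le> 9*(N* sqrt(N*L))"
      proof -
        have "N*N \<le> N* sqrt(N*L)" by (rule mult_left_mono[OF NsNL]) (use N1 in simp)
        then show ?thesis by linarith
      qed
      finally have "(N+2)*(N+2)*m \<le> 9*(N* sqrt(N*L))*m" using m0 by (rule mult_right_mono)
      also have "\<dots> \<le> C * (N * sqrt (N*L))" unfolding C_def by (rule Cbound(1)[OF sNL m0])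
      finally have cT: "measure lebesgue T \<le> C * (N * sqrt (N*L))" unfolding Tmeas .
      show ?thesis using F(1,3) order_trans[OF F(2) cT] by blast
    next
      case False
      then have LN: "L < N" by linarith
      show ?thesis
      proof (cases "S = {}")
        case True
        have "0 \<le> C * (N * sqrt (N*L))" using C0 sNL by simp
        then show ?thesis using True by (intro exI[of _ "{}"]) simp
      next
        case False
        then obtain x0 where "x0 \<in> S" by auto
        then have "A \<le> norm x0 + norm (k - x0)" "norm x0 \<le> N" "norm (k - x0) \<le> N"
          by (simp_all add: S_def shell_set_def)
        then have AN: "A \<le> 2*N" by linarith
        define s1 where "s1 = A + L + 4"
        define s0 where "s0 = A - 5"
        define E1 where "E1 = {x::real^2. norm x + norm (k - x) \<le> s1}"
        define E0 where "E0 = {x::real^2. norm x + norm (k - x) \<le> s0}"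
        define T where "T = E1 - E0"
        have E1m: "E1 \<in> lmeasurable" unfolding E1_def by (rule ellipse_lmeas)
        have E0m: "E0 \<in> lmeasurable" unfolding E0_def by (rule ellipse_lmeas)
        have E01: "E0 \<subseteq> E1"
        proof
          fix x assume "x \<in> E0"
          then have "norm x + norm (k - x) \<le> s0" by (simp add: E0_def)
          then have "norm x + norm (k - x) \<le> s1" using L1 unfolding s0_def s1_def by linarith
          then show "x \<in> E1" by (simp add: E1_def)
        qed
        have Tm: "T \<in> lmeasurable" unfolding T_def by (rule fmeasurable_Diff[OF E1m fmeasurableD[OF E0m]])
        have Tmeas: "measure lebesgue T = measure lebesgue E1 - measure lebesgue E0"
          unfolding T_def by (rule measurable_measure_Diff[OF E1m fmeasurableD[OF E0m] E01])
        have ST: "y \<in> T" if "x \<in> S" "dist x y < 2" for x y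
        proof -
          have xs: "A \<le> norm x + norm (k - x)" "norm x + norm (k - x) \<le> A + L"
            using that(1) by (auto simp: S_def shell_set_def)
          have "\<bar>norm y - norm x\<bar> \<le> norm (y - x)" by (rule norm_triangle_ineq3)
          moreover have "\<bar>norm (k - y) - norm (k - x)\<bar> \<le> norm ((k - y) - (k - x))" by (rule norm_triangle_ineq3)
          moreover have "norm (y - x) = dist x y" by (simp add: dist_norm norm_minus_commute)
          moreover have "norm ((k - y) - (k - x)) = dist x y" by (simp add: dist_norm)
          ultimately have "\<bar>(norm y + norm (k - y)) - (norm x + norm (k - x))\<bar> < 4"
            using that(2) by linarith
          then have "norm y + norm (k - y) \<le> s1" "\<not> norm y + norm (k - y) \<le> s0"
            using xs unfolding s1_def s0_def by linarith+
          then show ?thesis unfolding T_def E1_def E0_def by simp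
        qed
        from cover_count[OF SR Tm ST] obtain F where
          F0: "finite F \<and> real (card F) \<le> measure lebesgue T \<and> S \<subseteq> (\<Union>c\<in>F. unit_square c)" ..
        note F = F0[THEN conjunct1] F0[THEN conjunct2, THEN conjunct1] F0[THEN conjunct2, THEN conjunct2]
        have s1k: "s1 > norm k" using Ak L1 by (simp add: s1_def)
        have m1: "measure lebesgue E1 = (s1/2) * sqrt((s1/2)^2 - (norm k/2)^2) * m"
          using conjunct2[OF ellipse_measure[OF s1k]] unfolding E1_def m_def .
        have "measure lebesgue T \<le> 48*(N* sqrt(N*L)) * m"
        proof (cases "s0 > norm k")
          case True
          have m0': "measure lebesgue E0 = (s0/2) * sqrt((s0/2)^2 - (norm k/2)^2) * m"
            using conjunct2[OF ellipse_measure[OF True]] unfolding E0_def m_def .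
          have "(s1/2) * sqrt((s1/2)^2 - (norm k/2)^2) - (s0/2) * sqrt((s0/2)^2 - (norm k/2)^2)
                 \<le> 48*(N* sqrt(N*L))"
          proof -
            have "norm k/2 < (A-5)/2" using True by (simp add: s0_def)
            then show ?thesis unfolding s1_def s0_def by (rule key_bound(2)[OF L1 LN norm_ge_zero Ak AN])
          qed
          then have "((s1/2) * sqrt((s1/2)^2 - (norm k/2)^2) - (s0/2) * sqrt((s0/2)^2 - (norm k/2)^2)) * m
                 \<le> 48*(N* sqrt(N*L)) * m" using m0 by (rule mult_right_mono)
          then show ?thesis using Tmeas m1 m0' by (simp add: algebra_simps)
        next
          case False
          have "(s1/2) * sqrt((s1/2)^2 - (norm k/2)^2) \<le> 48*(N* sqrt(N*L))"
          proof -
            have "(A-5)/2 \<le> norm k/2" using False by (simp add: s0_def)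
            then show ?thesis unfolding s1_def by (rule key_bound(1)[OF L1 LN norm_ge_zero Ak AN])
          qed
          then have "(s1/2) * sqrt((s1/2)^2 - (norm k/2)^2) * m \<le> 48*(N* sqrt(N*L)) * m"
            using m0 by (rule mult_right_mono)
          moreover have "measure lebesgue E0 \<ge> 0" by simp
          ultimately show ?thesis using Tmeas m1 by linarith
        qed
        also have "\<dots> \<le> C * (N * sqrt (N*L))" unfolding C_def by (rule Cbound(2)[OF sNL m0])
        finally have cT: "measure lebesgue T \<le> C * (N * sqrt (N*L))" .
        show ?thesis using F(1,3) order_trans[OF F(2) cT] by blast
      qed
    qed
    then show "\<exists>F. finite F \<and> real (card F) \<le> C * N powr (3/2) * L powr (1/2) \<and>
                shell_set N L k A \<subseteq> (\<Union>c\<in>F. unit_square c)"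
      unfolding CN S_def .
  qed
qed

end
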